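(* Let $d$ be a positive integer and let $\{x_1,\dots,x_{2d}\}\subset\mathbb{S}^{d-1}$ be a nearly orthogonal set of $2d$ distinct unit vectors. Then it is a tight frame, i.e. for every $y\in\mathbb{R}^d$, $$\sum_{i=1}^{2d}\langle x_i,y\rangle^2=2\|y\|^2 .$$
   Context: A set of nonzero vectors in $\mathbb{R}^d$ is nearly orthogonal if, among any three distinct vectors of the set, at least two are orthogonal. $\langle\cdot,\cdot\rangle$ is the Euclidean inner product and $\mathbb{S}^{d-1}$ is the unit sphere in $\mathbb{R}^d$. *)

theory Defs
  imports "HOL-Analysis.Analysis"
begin

definition nearly_orthogonal :: "'a::real_inner set \<Rightarrow> bool" where
  "nearly_orthogonal X \<longleftrightarrow> 0 \<notin> X \<and>
     (\<forall>u\<in>X. \<forall>v\<in>X. \<forall>w\<in>X. u \<noteq> v \<and> v \<noteq> w \<and> u \<noteq> w \<longrightarrow>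
        u \<bullet> v = 0 \<or> v \<bullet> w = 0 \<or> u \<bullet> w = 0)"

end

theory Submission
  imports Defs
begin

lemma bessel_aux:
  fixes x :: "'a::real_inner"
  assumes fin: "finite N" and un: "\<And>z. z \<in> N \<Longrightarrow> norm z = 1"
    and orth: "\<And>z w. z \<in> N \<Longrightarrow> w \<in> N \<Longrightarrow> z \<noteq> w \<Longrightarrow> z \<bullet> w = 0"
  shows "(\<Sum>z\<in>N. (x \<bullet> z)\<^sup>2) \<le> (norm x)\<^sup>2"
proof -
  define p where "p = (\<Sum>z\<in>N. (x \<bullet> z) *\<^sub>R z)"
  have pw: "pairwise (\<lambda>i j. orthogonal ((x \<bullet> i) *\<^sub>R i) ((x \<bullet> j) *\<^sub>R j)) N"
    using orth by (auto simp: pairwise_def orthogonal_def)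
  have np: "(norm p)\<^sup>2 = (\<Sum>z\<in>N. (x \<bullet> z)\<^sup>2)"
    unfolding p_def using norm_sum_Pythagorean[OF fin pw] un by simp
  have xp: "x \<bullet> p = (\<Sum>z\<in>N. (x \<bullet> z)\<^sup>2)"
    unfolding p_def by (simp add: inner_sum_right power2_eq_square)
  have "0 \<le> (norm (x - p))\<^sup>2" by simp
  also have "\<dots> = (norm x)\<^sup>2 - 2 * (x \<bullet> p) + (norm p)\<^sup>2"
    by (simp add: power2_norm_eq_inner inner_diff_left inner_diff_right inner_commute)
  finally show ?thesis using np xp by simp
qed

theorem corollary3p2:
  fixes X :: "'a::euclidean_space set"
  assumes "finite X"
    and "card X = 2 * DIM('a)"
    and "\<And>x. x \<in> X \<Longrightarrow> norm x = 1"
    and "nearly_orthogonal X"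
  shows "\<forall>y::'a. (\<Sum>x\<in>X. (x \<bullet> y)\<^sup>2) = 2 * (norm y)\<^sup>2"
proof -
  note fin = assms(1) and un = assms(3)
  have no: "\<And>u v w. u\<in>X \<Longrightarrow> v\<in>X \<Longrightarrow> w\<in>X \<Longrightarrow> u \<noteq> v \<Longrightarrow> v \<noteq> w \<Longrightarrow> u \<noteq> w \<Longrightarrow>
        u \<bullet> v = 0 \<or> v \<bullet> w = 0 \<or> u \<bullet> w = 0"
    using assms(4) unfolding nearly_orthogonal_def by blast
  have S1: "(\<Sum>z\<in>X. (x \<bullet> z)\<^sup>2) \<le> 2" if xX: "x \<in> X" for x
  proof -
    define N where "N = {z\<in>X. z \<noteq> x \<and> x \<bullet> z \<noteq> 0}"
    have finN: "finite N" using fin by (simp add: N_def)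
    have b: "(\<Sum>z\<in>N. (x \<bullet> z)\<^sup>2) \<le> (norm x)\<^sup>2"
    proof (rule bessel_aux[OF finN])
      show "norm z = 1" if "z \<in> N" for z using that un by (auto simp: N_def)
      show "z \<bullet> w = 0" if "z \<in> N" "w \<in> N" "z \<noteq> w" for z w
        using that xX no[of x z w] by (auto simp: N_def inner_commute)
    qed
    have "(\<Sum>z\<in>X. (x \<bullet> z)\<^sup>2) = (x \<bullet> x)\<^sup>2 + (\<Sum>z\<in>X-{x}. (x \<bullet> z)\<^sup>2)"
      using fin xX by (simp add: sum.remove)
    also have "(\<Sum>z\<in>X-{x}. (x \<bullet> z)\<^sup>2) = (\<Sum>z\<in>N. (x \<bullet> z)\<^sup>2)"
      by (rule sum.mono_neutral_cong_right) (use fin in \<open>auto simp: N_def\<close>)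
    also have "x \<bullet> x = 1" using un[OF xX] by (simp add: power2_norm_eq_inner[symmetric])
    finally show ?thesis using b un[OF xX] by simp
  qed
  have S2: "(\<Sum>x\<in>X. \<Sum>z\<in>X. (x \<bullet> z)\<^sup>2) \<le> 4 * DIM('a)"
  proof -
    have "(\<Sum>x\<in>X. \<Sum>z\<in>X. (x \<bullet> z)\<^sup>2) \<le> (\<Sum>x\<in>X. 2)"
      by (rule sum_mono) (rule S1)
    also have "\<dots> = 4 * DIM('a)" using assms(2) by simp
    finally show ?thesis .
  qed
  define T where "T y = (\<Sum>x\<in>X. (x \<bullet> y) *\<^sub>R x)" for y :: 'a
  have nT: "(norm (T b))\<^sup>2 = (\<Sum>x\<in>X. \<Sum>z\<in>X. (x \<bullet> b) * (z \<bullet> b) * (x \<bullet> z))" for b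
    unfolding T_def power2_norm_eq_inner
    by (simp add: inner_sum_left inner_sum_right sum_distrib_left inner_commute mult.commute mult.left_commute)
  have bT: "b \<bullet> T b = (\<Sum>x\<in>X. (x \<bullet> b)\<^sup>2)" for b
    unfolding T_def by (simp add: inner_sum_right power2_eq_square inner_commute)
  have A1: "(\<Sum>b\<in>Basis. (norm (T b))\<^sup>2) = (\<Sum>x\<in>X. \<Sum>z\<in>X. (x \<bullet> z)\<^sup>2)"
  proof -
    have "(\<Sum>b\<in>Basis. (norm (T b))\<^sup>2) = (\<Sum>x\<in>X. \<Sum>z\<in>X. (x \<bullet> z) * (\<Sum>b\<in>Basis. (x \<bullet> b) * (z \<bullet> b)))"
      unfolding nT by (simp add: sum_distrib_left sum.swap[of _ Basis] mult.commute mult.left_commute)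
    also have "\<dots> = (\<Sum>x\<in>X. \<Sum>z\<in>X. (x \<bullet> z)\<^sup>2)"
      by (simp add: euclidean_inner[symmetric] power2_eq_square)
    finally show ?thesis .
  qed
  have A2: "(\<Sum>b\<in>Basis. b \<bullet> T b) = 2 * DIM('a)"
  proof -
    have "(\<Sum>b\<in>Basis. b \<bullet> T b) = (\<Sum>x\<in>X. \<Sum>b\<in>Basis. (x \<bullet> b)\<^sup>2)"
      unfolding bT by (rule sum.swap)
    also have "\<dots> = (\<Sum>x\<in>X. (norm x)\<^sup>2)"
      by (rule sum.cong[OF refl]) (metis (no_types, lifting) euclidean_inner power2_eq_square power2_norm_eq_inner sum.cong)
    also have "\<dots> = real (card X)" using un by simp
    finally show ?thesis using assms(2) by simp
  qed
  have Q: "(\<Sum>b\<in>Basis. (norm (T b - 2 *\<^sub>R b))\<^sup>2) =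
     (\<Sum>b\<in>Basis. (norm (T b))\<^sup>2) - 4 * (\<Sum>b\<in>Basis. b \<bullet> T b) + 4 * DIM('a)"
  proof -
    have "(norm (T b - 2 *\<^sub>R b))\<^sup>2 = (norm (T b))\<^sup>2 - 4 * (b \<bullet> T b) + 4" if "b \<in> Basis" for b
      using that by (simp add: power2_norm_eq_inner inner_diff_left inner_diff_right inner_commute)
    then have "(\<Sum>b\<in>Basis. (norm (T b - 2 *\<^sub>R b))\<^sup>2) = (\<Sum>b\<in>Basis. (norm (T b))\<^sup>2 - 4 * (b \<bullet> T b) + 4)"
      by (rule sum.cong[OF refl])
    also have "\<dots> = (\<Sum>b\<in>Basis. (norm (T b))\<^sup>2) - 4 * (\<Sum>b\<in>Basis. b \<bullet> T b) + 4 * DIM('a)"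
      by (simp add: sum.distrib sum_subtractf sum_distrib_left)
    finally show ?thesis .
  qed
  have Q0: "(\<Sum>b\<in>Basis. (norm (T b - 2 *\<^sub>R b))\<^sup>2) \<le> 0"
    using Q A1 A2 S2 by simp
  have Tb: "T b = 2 *\<^sub>R b" if "b \<in> Basis" for b
  proof -
    have "(norm (T b - 2 *\<^sub>R b))\<^sup>2 = 0"
      using sum_nonneg_eq_0_iff[of Basis "\<lambda>b. (norm (T b - 2 *\<^sub>R b))\<^sup>2"] Q0 that
      by (metis (no_types, lifting) antisym finite_Basis sum_nonneg zero_le_power2)
    then show ?thesis by simp
  qed
  show ?thesis
  proof
    fix y :: 'a
    have "T y = (\<Sum>x\<in>X. (\<Sum>b\<in>Basis. (y \<bullet> b) * (x \<bullet> b)) *\<^sub>R x)"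
      unfolding T_def by (simp add: euclidean_inner[of _ y] mult.commute)
    also have "\<dots> = (\<Sum>b\<in>Basis. (y \<bullet> b) *\<^sub>R T b)"
      unfolding T_def by (simp add: scaleR_sum_left scaleR_sum_right sum.swap[of _ Basis])
    also have "\<dots> = (\<Sum>b\<in>Basis. (y \<bullet> b) *\<^sub>R (2 *\<^sub>R b))"
      by (rule sum.cong) (simp_all add: Tb)
    also have "\<dots> = 2 *\<^sub>R y"
    proof -
      have "(\<Sum>b\<in>Basis. (y \<bullet> b) *\<^sub>R (2 *\<^sub>R b)) = 2 *\<^sub>R (\<Sum>b\<in>Basis. (y \<bullet> b) *\<^sub>R b)"
        by (simp add: scaleR_sum_right mult.commute)
      then show ?thesis by (simp only: euclidean_representation)
    qed
    finally have Ty: "T y = 2 *\<^sub>R y" .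
    have "(\<Sum>x\<in>X. (x \<bullet> y)\<^sup>2) = y \<bullet> T y" by (simp add: bT)
    also have "\<dots> = 2 * (norm y)\<^sup>2" by (simp add: Ty power2_norm_eq_inner)
    finally show "(\<Sum>x\<in>X. (x \<bullet> y)\<^sup>2) = 2 * (norm y)\<^sup>2" .
  qed
qed

end
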